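(* Let $k>2$, $n\ge1$, and let $\sigma:Z_k\to Z_k$ be a map. Define $\psi_\sigma:P_k^n\to P_k^n$ by $\psi_\sigma(f)(\bar a)=\sigma(f(\bar a))$ for all $\bar a\in Z_k^n$. Then $f\simeq_{cmr}\psi_\sigma(f)$ for all $f\in P_k^n$ if and only if $\sigma$ is a permutation of $Z_k$.
   Context: $Z_k=\{0,\dots,k-1\}$; $P_k^n$ is the set of all maps $Z_k^n\to Z_k$ in variables $x_1,\dots,x_n$. $x_i$ is essential in $f$ if changing only the $i$-th argument can change the value of $f$; $Ess(f)$, $ess(f)=|Ess(f)|$. For distinct essential $x_i,x_j$, $f_{i\leftarrow j}(a_1,\dots,a_n)=f(a_1,\dots,a_{i-1},a_j,a_{i+1},\dots,a_n)$. The relation $f\simeq_{cmr}g$ is defined recursively: if $ess(f)\le1$ it means $ess(f)=ess(g)$; if $ess(f)\ge2$ it means $ess(f)=ess(g)$ and there is a permutation $\sigma'$ of $\{1,\dots,n\}$ with $f_{i\leftarrow j}\simeq_{cmr} g_{\sigma'(i)\leftarrow\sigma'(j)}$ for all $j<i$ with $x_i,x_j\in Ess(f)$. *)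

theory Defs
  imports Main
begin

(* Tuples of Z_k^n are lists of length n with entries < k; variable x_(i+1) is list index i. *)
definition tuples :: "nat \<Rightarrow> nat \<Rightarrow> nat list set" where
  "tuples k n = {a. length a = n \<and> (\<forall>x\<in>set a. x < k)}"

(* P_k^n: maps Z_k^n -> Z_k (only values on tuples k n matter) *)
definition Pkn :: "nat \<Rightarrow> nat \<Rightarrow> (nat list \<Rightarrow> nat) set" where
  "Pkn k n = {f. \<forall>a\<in>tuples k n. f a < k}"

definition essential :: "nat \<Rightarrow> nat \<Rightarrow> (nat list \<Rightarrow> nat) \<Rightarrow> nat \<Rightarrow> bool" where
  "essential k n f i \<longleftrightarrow> i < n \<and>
     (\<exists>a\<in>tuples k n. \<exists>c<k. f a \<noteq> f (a[i := c]))"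

definition Ess :: "nat \<Rightarrow> nat \<Rightarrow> (nat list \<Rightarrow> nat) \<Rightarrow> nat set" where
  "Ess k n f = {i. essential k n f i}"

definition ess :: "nat \<Rightarrow> nat \<Rightarrow> (nat list \<Rightarrow> nat) \<Rightarrow> nat" where
  "ess k n f = card (Ess k n f)"

definition ident :: "(nat list \<Rightarrow> nat) \<Rightarrow> nat \<Rightarrow> nat \<Rightarrow> nat list \<Rightarrow> nat" where
  "ident f i j = (\<lambda>a. f (a[i := a ! j]))"

(* The recursive relation, with a fuel parameter; since ess(f_{i<-j}) < ess f,
   fuel ess f is always sufficient, see cmr below. *)
fun cmr_fuel :: "nat \<Rightarrow> nat \<Rightarrow> nat \<Rightarrow> (nat list \<Rightarrow> nat) \<Rightarrow> (nat list \<Rightarrow> nat) \<Rightarrow> bool" where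
  "cmr_fuel k n 0 f g = (ess k n f = ess k n g)"
| "cmr_fuel k n (Suc m) f g =
     (if ess k n f \<le> 1 then ess k n f = ess k n g
      else ess k n f = ess k n g \<and>
        (\<exists>\<sigma>'. bij_betw \<sigma>' {..<n} {..<n} \<and>
           (\<forall>i\<in>Ess k n f. \<forall>j\<in>Ess k n f. j < i \<longrightarrow>
              cmr_fuel k n m (ident f i j) (ident g (\<sigma>' i) (\<sigma>' j)))))"

definition cmr :: "nat \<Rightarrow> nat \<Rightarrow> (nat list \<Rightarrow> nat) \<Rightarrow> (nat list \<Rightarrow> nat) \<Rightarrow> bool" where
  "cmr k n f g = cmr_fuel k n (ess k n f) f g"

definition psi :: "(nat \<Rightarrow> nat) \<Rightarrow> (nat list \<Rightarrow> nat) \<Rightarrow> (nat list \<Rightarrow> nat)" where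
  "psi \<sigma> f = (\<lambda>a. \<sigma> (f a))"

end

theory Submission
  imports Defs
begin

lemma upd_tuple: "a \<in> tuples k n \<Longrightarrow> c < k \<Longrightarrow> a[i := c] \<in> tuples k n"
  unfolding tuples_def using set_update_subset_insert by fastforce

lemma Ess_psi:
  assumes "inj_on \<sigma> {..<k}" "f \<in> Pkn k n"
  shows "Ess k n (psi \<sigma> f) = Ess k n f"
proof -
  have "\<And>a c. a \<in> tuples k n \<Longrightarrow> c < k \<Longrightarrow>
     (\<sigma> (f a) \<noteq> \<sigma> (f (a[i := c]))) = (f a \<noteq> f (a[i := c]))" for i
  proof -
    fix a c assume a: "a \<in> tuples k n" and c: "c < k"
    have "f a < k" "f (a[i:=c]) < k" using assms(2) a upd_tuple[OF a c] unfolding Pkn_def by auto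
    thus "(\<sigma> (f a) \<noteq> \<sigma> (f (a[i := c]))) = (f a \<noteq> f (a[i := c]))"
      using assms(1) unfolding inj_on_def by auto
  qed
  thus ?thesis unfolding Ess_def essential_def psi_def by (auto; blast)
qed

lemma ident_Pkn:
  assumes "f \<in> Pkn k n" "j < n"
  shows "ident f i j \<in> Pkn k n"
proof -
  have "\<And>a. a \<in> tuples k n \<Longrightarrow> a[i := a ! j] \<in> tuples k n"
    using assms(2) by (intro upd_tuple) (auto simp: tuples_def)
  thus ?thesis using assms(1) unfolding Pkn_def ident_def by auto
qed

lemma cmr_fuel_ess: "cmr_fuel k n m f g \<Longrightarrow> ess k n f = ess k n g"
  by (cases m) (auto split: if_splits)

lemma bij_dir:
  assumes "inj_on \<sigma> {..<k}"
  shows "\<forall>f\<in>Pkn k n. cmr_fuel k n m f (psi \<sigma> f)"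
proof (induction m)
  case 0
  then show ?case using Ess_psi[OF assms] by (simp add: ess_def)
next
  case (Suc m)
  show ?case
  proof
    fix f assume f: "f \<in> Pkn k n"
    have e: "ess k n f = ess k n (psi \<sigma> f)" using Ess_psi[OF assms f] by (simp add: ess_def)
    have "\<forall>i\<in>Ess k n f. \<forall>j\<in>Ess k n f. j < i \<longrightarrow>
              cmr_fuel k n m (ident f i j) (ident (psi \<sigma> f) (id i) (id j))"
    proof (intro ballI impI)
      fix i j assume "j \<in> Ess k n f"
      hence "j < n" by (simp add: Ess_def essential_def)
      hence "ident f i j \<in> Pkn k n" using ident_Pkn f by blast
      moreover have "ident (psi \<sigma> f) (id i) (id j) = psi \<sigma> (ident f i j)"
        by (simp add: ident_def psi_def)
      ultimately show "cmr_fuel k n m (ident f i j) (ident (psi \<sigma> f) (id i) (id j))"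
        using Suc.IH by simp
    qed
    moreover have "bij_betw id {..<n} {..<n}" by simp
    ultimately show "cmr_fuel k n (Suc m) f (psi \<sigma> f)" using e by auto
  qed
qed

theorem theorem17:
  fixes k n :: nat and \<sigma> :: "nat \<Rightarrow> nat"
  assumes "k > 2" and "n \<ge> 1"
    and "\<forall>x<k. \<sigma> x < k"
  shows "(\<forall>f\<in>Pkn k n. cmr k n f (psi \<sigma> f)) \<longleftrightarrow> bij_betw \<sigma> {..<k} {..<k}"
proof
  assume b: "bij_betw \<sigma> {..<k} {..<k}"
  then have "inj_on \<sigma> {..<k}" by (simp add: bij_betw_def)
  from bij_dir[OF this] show "\<forall>f\<in>Pkn k n. cmr k n f (psi \<sigma> f)" by (simp add: cmr_def)
next
  assume H: "\<forall>f\<in>Pkn k n. cmr k n f (psi \<sigma> f)"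
  show "bij_betw \<sigma> {..<k} {..<k}"
  proof (rule ccontr)
    assume nb: "\<not> ?thesis"
    have sub: "\<sigma> ` {..<k} \<subseteq> {..<k}" using assms(3) by auto
    have "\<not> inj_on \<sigma> {..<k}"
    proof
      assume "inj_on \<sigma> {..<k}"
      hence "card (\<sigma> ` {..<k}) = k" by (simp add: card_image)
      hence "\<sigma> ` {..<k} = {..<k}" using sub by (simp add: card_subset_eq)
      thus False using nb \<open>inj_on \<sigma> {..<k}\<close> by (simp add: bij_betw_def)
    qed
    then obtain x y where xy: "x < k" "y < k" "x \<noteq> y" "\<sigma> x = \<sigma> y"
      unfolding inj_on_def by auto
    define f where "f = (\<lambda>a::nat list. if a ! 0 = x then x else y)"
    have fP: "f \<in> Pkn k n" using xy by (simp add: Pkn_def f_def)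
    have "psi \<sigma> f = (\<lambda>a. \<sigma> x)" using xy by (auto simp: psi_def f_def)
    hence e0: "Ess k n (psi \<sigma> f) = {}" by (simp add: Ess_def essential_def)
    define a where "a = replicate n x"
    have a: "a \<in> tuples k n" using xy by (simp add: a_def tuples_def)
    have "f a \<noteq> f (a[0 := y])" using xy assms(2) by (simp add: a_def f_def)
    hence "0 \<in> Ess k n f" using a xy assms(2) unfolding Ess_def essential_def by auto
    moreover have "Ess k n f \<subseteq> {..<n}" by (auto simp: Ess_def essential_def)
    ultimately have "ess k n f \<noteq> 0" unfolding ess_def
      by (metis card_0_eq empty_iff finite_lessThan finite_subset)
    moreover have "ess k n f = ess k n (psi \<sigma> f)"
      using H fP cmr_fuel_ess unfolding cmr_def by blast
    ultimately show False using e0 by (simp add: ess_def)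
  qed
qed

end
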